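(* Let $\alpha\ge1$, $N\ge2$, and let $\mathbf{X}^\wedge(t)$ be the Markov chain with generator $\mathcal{L}_{N,\alpha}$ started from $\wedge=(N,\dots,N)$. Then for every $k\in\{1,\dots,N-1\}$ and every $t\ge0$, $$\mathbb{E}[X^\wedge_k(t)]\le k+2Ne^{-\mathrm{gap}_Nt},\qquad \mathrm{gap}_N=1-\cos(\pi/N).$$ In particular, for $K\in\mathbb{N}$, $u_i=\lfloor iN/K\rfloor$ and $W(x)=\sum_{i=1}^{K-1}(x_{u_i}-u_i)$, the law $\mu_t$ of $\mathbf{X}^\wedge(t)$ satisfies $\mu_t(W)\le2KNe^{-\mathrm{gap}_Nt}$ for all $t\ge0$.
   Context: $\Omega_N=\{x\in\mathbb{R}^{N-1}:0\le x_1\le\dots\le x_{N-1}\le N\}$, $x_0=0,x_N=N$; $\rho_\alpha(u)=\frac{\Gamma(2\alpha)}{\Gamma(\alpha)^2}[u(1-u)]^{\alpha-1}$; $(\mathcal{L}_{N,\alpha}f)(x)=\sum_{i=1}^{N-1}\int_0^1(f(x^{(i,u)})-f(x))\rho_\alpha(u)du$ with $x^{(i,u)}_j=x_j$ ($j\ne i$), $x^{(i,u)}_i=ux_{i-1}+(1-u)x_{i+1}$. *)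

theory Defs
  imports "HOL-Analysis.Analysis"
begin

text \<open>Configurations x = (x_0, x_1, ..., x_N) are functions nat to real; x_0 = 0 and
  x_N = N are the fixed boundary values, coordinates 1..N-1 move.\<close>

definition rho :: "real \<Rightarrow> real \<Rightarrow> real" where
  "rho \<alpha> u = Gamma (2 * \<alpha>) / (Gamma \<alpha>)^2 * (u * (1 - u)) powr (\<alpha> - 1)"

definition resample :: "(nat \<Rightarrow> real) \<Rightarrow> nat \<Rightarrow> real \<Rightarrow> nat \<Rightarrow> real" where
  "resample x i u = x(i := u * x (i - 1) + (1 - u) * x (i + 1))"

definition gen :: "nat \<Rightarrow> real \<Rightarrow> ((nat \<Rightarrow> real) \<Rightarrow> real) \<Rightarrow> (nat \<Rightarrow> real) \<Rightarrow> real" where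
  "gen N \<alpha> f x = (\<Sum>i = 1..N - 1. integral {0..1} (\<lambda>u. (f (resample x i u) - f x) * rho \<alpha> u))"

text \<open>The generator is bounded (total jump rate N-1), so the transition semigroup of the
  Markov chain is exp(tL) = sum_n t^n L^n / n!; expectations E_x[f(X(t))] = semigroup N alpha t f x.\<close>
definition semigroup :: "nat \<Rightarrow> real \<Rightarrow> real \<Rightarrow> ((nat \<Rightarrow> real) \<Rightarrow> real) \<Rightarrow> (nat \<Rightarrow> real) \<Rightarrow> real" where
  "semigroup N \<alpha> t f x = (\<Sum>n. t ^ n / fact n * ((gen N \<alpha> ^^ n) f) x)"

definition wedge :: "nat \<Rightarrow> nat \<Rightarrow> real" where
  "wedge N i = (if i = 0 then 0 else real N)"

definition gap :: "nat \<Rightarrow> real" where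
  "gap N = 1 - cos (pi / real N)"

definition Wfun :: "nat \<Rightarrow> nat \<Rightarrow> (nat \<Rightarrow> real) \<Rightarrow> real" where
  "Wfun N K x = (\<Sum>i = 1..K - 1. x (i * N div K) - real (i * N div K))"

end

theory Submission
  imports Defs
begin

lemma cot_sin_tele:
  fixes z :: real assumes "sin z \<noteq> 0"
  shows "cot z * sin (2 * real k * z) = (\<Sum>l=1..k. cos (2 * real l * z) + cos (2 * (real l - 1) * z))"
proof (induction k)
  case 0 then show ?case by simp
next
  case (Suc k)
  have q1: "(2 * real (Suc k) * z - 2 * real k * z)/2 = z" "(2 * real (Suc k) * z + 2 * real k * z)/2 = (2 * real k + 1) * z"
      "2 * (real (Suc k) - 1) * z = 2 * real k * z"
    by (simp_all add: algebra_simps)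
  have e1: "sin (2 * real (Suc k) * z) - sin (2 * real k * z) = 2 * sin z * cos ((2 * real k + 1) * z)"
    using sin_diff_sin[of "2 * real (Suc k) * z" "2 * real k * z"] unfolding q1 by simp
  have e2: "cos (2 * real (Suc k) * z) + cos (2 * (real (Suc k) - 1) * z) = 2 * cos ((2 * real k + 1) * z) * cos z"
    using cos_plus_cos[of "2 * real (Suc k) * z" "2 * real k * z"] unfolding q1 by simp
  have e3: "cot z * (2 * sin z * cos ((2 * real k + 1) * z)) = 2 * cos ((2 * real k + 1) * z) * cos z"
    using assms by (simp add: cot_def)
  have "cot z * sin (2 * real (Suc k) * z) = cot z * sin (2 * real k * z) + cot z * (2 * sin z * cos ((2 * real k + 1) * z))"
    using e1 by (simp add: algebra_simps)
  then show ?case using Suc e2 e3 by simp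
qed

lemma cos_tele:
  fixes x :: real
  shows "(\<Sum>m=1..M. 2 * sin (x/2) * cos (real m * x)) = sin ((real M + 1/2) * x) - sin (x/2)"
proof (induction M)
  case 0 then show ?case by simp
next
  case (Suc M)
  have q: "((real (Suc M) + 1/2) * x - (real M + 1/2) * x)/2 = x/2" "((real (Suc M) + 1/2) * x + (real M + 1/2) * x)/2 = real (Suc M) * x"
    by (simp_all add: algebra_simps)
  have "2 * sin (x/2) * cos (real (Suc M) * x) = sin ((real (Suc M) + 1/2) * x) - sin ((real M + 1/2) * x)"
    using sin_diff_sin[of "(real (Suc M) + 1/2) * x" "(real M + 1/2) * x"] unfolding q by simp
  then show ?case using Suc by simp
qed

lemma cos_sum_C:
  assumes "0 < p" "p < 2 * N"
  shows "(\<Sum>m=1..N-1. cos (real m * (real p * pi / real N))) = - (1 + (-1)^p) / 2"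
proof -
  define x where "x = real p * pi / real N"
  have N: "N > 0" using assms by simp
  have "0 < x/2" using assms N by (simp add: x_def)
  moreover have "x/2 < pi" using assms N by (simp add: x_def field_simps)
  ultimately have s: "sin (x/2) > 0" by (intro sin_gt_zero)
  have "(real (N-1) + 1/2) * x = real p * pi - x/2"
    using N by (simp add: x_def of_nat_diff field_simps)
  then have "sin ((real (N-1) + 1/2) * x) = - ((-1)^p * sin (x/2))"
    by (simp add: sin_diff)
  with cos_tele[of x "N-1"] have "2 * sin (x/2) * (\<Sum>m=1..N-1. cos (real m * x)) = - ((-1)^p * sin (x/2)) - sin (x/2)"
    by (simp add: sum_distrib_left)
  then have "sin (x/2) * (1 + 2 * (\<Sum>m=1..N-1. cos (real m * x)) + (-1)^p) = 0"
    by (simp add: algebra_simps)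
  with s have "1 + 2 * (\<Sum>m=1..N-1. cos (real m * x)) + (-1)^p = 0" by simp
  then show ?thesis unfolding x_def[symmetric] by (simp add: field_simps)
qed

definition Csum :: "nat \<Rightarrow> nat \<Rightarrow> real" where
  "Csum N p = (\<Sum>m=1..N-1. cos (real m * (real p * pi / real N)))"

lemma Csum_0: "Csum N 0 = real N - 1" if "N \<ge> 1"
  using that by (simp add: Csum_def of_nat_diff)

lemma Csum_pair: assumes "1 \<le> k" "k < N" shows "Csum N (Suc k) + Csum N k = -1"
proof -
  have "Csum N (Suc k) = - (1 + (-1)^(Suc k)) / 2" unfolding Csum_def using assms by (intro cos_sum_C) auto
  moreover have "Csum N k = - (1 + (-1)^k) / 2" unfolding Csum_def using assms by (intro cos_sum_C) auto
  ultimately show ?thesis by simp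
qed

lemma Csum_tele: assumes "1 \<le> k" "k \<le> N" shows "(\<Sum>l=1..k. Csum N l + Csum N (l - 1)) = real N - real k"
  using assms
proof (induction k)
  case 0 then show ?case by simp
next
  case (Suc k)
  show ?case
  proof (cases "k = 0")
    case True
    have "Csum N 1 = - (1 + (-1)^1) / 2" unfolding Csum_def using Suc.prems by (intro cos_sum_C) auto
    then show ?thesis using True Csum_0[of N] Suc.prems by simp
  next
    case False
    then have "(\<Sum>l=1..k. Csum N l + Csum N (l - 1)) = real N - real k" using Suc by simp
    then show ?thesis using Csum_pair[of k N] False Suc.prems by simp
  qed
qed

lemma sine_expansion:
  assumes "N \<ge> 2" "1 \<le> k" "k \<le> N"
  shows "(\<Sum>m=1..N-1. cot (real m * pi / (2 * real N)) * sin (real m * real k * pi / real N)) = real N - real k"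
proof -
  have "(\<Sum>m=1..N-1. cot (real m * pi / (2 * real N)) * sin (real m * real k * pi / real N))
      = (\<Sum>m=1..N-1. \<Sum>l=1..k. cos (real m * (real l * pi / real N)) + cos (real m * (real (l - 1) * pi / real N)))"
  proof (rule sum.cong[OF refl])
    fix m assume m: "m \<in> {1..N-1}"
    define z where "z = real m * pi / (2 * real N)"
    have "0 < z" using m assms by (simp add: z_def)
    moreover have "m < N * 2" using m by auto
    then have "real m < real N * 2" by linarith
    then have "z < pi" using assms by (simp add: z_def field_simps)
    ultimately have "sin z \<noteq> 0" using sin_gt_zero by force
    from cot_sin_tele[OF this, of k]
    have "cot z * sin (2 * real k * z) = (\<Sum>l=1..k. cos (2 * real l * z) + cos (2 * (real l - 1) * z))" .
    moreover have "2 * real k * z = real m * real k * pi / real N" using assms by (simp add: z_def)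
    moreover have "(\<Sum>l=1..k. cos (2 * real l * z) + cos (2 * (real l - 1) * z)) =
       (\<Sum>l=1..k. cos (real m * (real l * pi / real N)) + cos (real m * (real (l - 1) * pi / real N)))"
    proof (rule sum.cong[OF refl])
      fix l assume "l \<in> {1..k}"
      then have "2 * real l * z = real m * (real l * pi / real N)" "2 * (real l - 1) * z = real m * (real (l - 1) * pi / real N)"
        using assms by (auto simp: z_def of_nat_diff field_simps)
      then show "cos (2 * real l * z) + cos (2 * (real l - 1) * z) = cos (real m * (real l * pi / real N)) + cos (real m * (real (l - 1) * pi / real N))"
        by simp
    qed
    ultimately show "cot (real m * pi / (2 * real N)) * sin (real m * real k * pi / real N) =
       (\<Sum>l=1..k. cos (real m * (real l * pi / real N)) + cos (real m * (real (l - 1) * pi / real N)))"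
      unfolding z_def[symmetric] by metis
  qed
  also have "\<dots> = (\<Sum>l=1..k. Csum N l + Csum N (l - 1))"
    unfolding Csum_def by (subst sum.swap) (simp add: sum.distrib)
  also have "\<dots> = real N - real k" using Csum_tele assms by simp
  finally show ?thesis .
qed

definition Dop :: "nat \<Rightarrow> (nat \<Rightarrow> real) \<Rightarrow> nat \<Rightarrow> real" where
  "Dop N x j = (if 1 \<le> j \<and> j \<le> N - 1 then (x (j - 1) + x (j + 1)) / 2 - x j else 0)"

definition acoef :: "nat \<Rightarrow> nat \<Rightarrow> real" where
  "acoef N m = cot (real m * pi / (2 * real N))"

definition sn :: "nat \<Rightarrow> nat \<Rightarrow> nat \<Rightarrow> real" where
  "sn N m j = sin (real m * real j * pi / real N)"

definition cs :: "nat \<Rightarrow> nat \<Rightarrow> real" where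
  "cs N m = cos (real m * pi / real N)"

lemma sn_0 [simp]: "sn N m 0 = 0" by (simp add: sn_def)

lemma sn_N [simp]: "N > 0 \<Longrightarrow> sn N m N = 0"
  by (simp add: sn_def)

lemma sn_rec: assumes "1 \<le> j" shows "sn N m (j - 1) + sn N m (j + 1) = 2 * cs N m * sn N m j"
proof -
  have q: "(real m * real (j + 1) * pi / real N + real m * real (j - 1) * pi / real N) / 2 = real m * real j * pi / real N"
     "(real m * real (j + 1) * pi / real N - real m * real (j - 1) * pi / real N) / 2 = real m * pi / real N"
    using assms by (cases "N = 0"; simp add: of_nat_diff field_simps)+
  show ?thesis
    using sin_plus_sin[of "real m * real (j + 1) * pi / real N" "real m * real (j - 1) * pi / real N"]
    unfolding q sn_def cs_def by (simp add: algebra_simps)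
qed

lemma sum_sn_rec: assumes "1 \<le> j"
  shows "(\<Sum>m=1..N-1. g m * sn N m (j - 1)) + (\<Sum>m=1..N-1. g m * sn N m (j + 1)) = 2 * (\<Sum>m=1..N-1. g m * cs N m * sn N m j)"
proof -
  have "(\<Sum>m=1..N-1. g m * sn N m (j - 1)) + (\<Sum>m=1..N-1. g m * sn N m (j + 1)) = (\<Sum>m=1..N-1. g m * (sn N m (j - 1) + sn N m (j + 1)))"
    by (simp add: sum.distrib algebra_simps)
  also have "\<dots> = (\<Sum>m=1..N-1. 2 * (g m * cs N m * sn N m j))"
    using sn_rec[OF assms] by (simp add: algebra_simps)
  finally show ?thesis by (simp add: sum_distrib_left)
qed

lemma wedge_exp: assumes "N \<ge> 2" "j \<le> N"
  shows "wedge N j = real j + (\<Sum>m=1..N-1. acoef N m * sn N m j)"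
proof (cases "j = 0")
  case True then show ?thesis by (simp add: wedge_def)
next
  case False
  then show ?thesis using sine_expansion[of N j] assms by (simp add: wedge_def acoef_def sn_def)
qed

lemma Dpow_wedge: assumes "N \<ge> 2"
  shows "j \<le> N \<Longrightarrow> ((Dop N ^^ n) (wedge N)) j = (if n = 0 then real j else 0) + (\<Sum>m=1..N-1. acoef N m * (cs N m - 1)^n * sn N m j)"
proof (induction n arbitrary: j)
  case 0 then show ?case using wedge_exp[OF assms] by simp
next
  case (Suc n)
  show ?case
  proof (cases "1 \<le> j \<and> j \<le> N - 1")
    case True
    then have "((Dop N ^^ Suc n) (wedge N)) j = (((Dop N ^^ n) (wedge N)) (j - 1) + ((Dop N ^^ n) (wedge N)) (j + 1)) / 2 - ((Dop N ^^ n) (wedge N)) j"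
      by (simp add: Dop_def)
    also have "\<dots> = ((if n = 0 then real (j - 1) else 0) + (\<Sum>m=1..N-1. acoef N m * (cs N m - 1)^n * sn N m (j - 1))
        + ((if n = 0 then real (j + 1) else 0) + (\<Sum>m=1..N-1. acoef N m * (cs N m - 1)^n * sn N m (j + 1)))) / 2
        - ((if n = 0 then real j else 0) + (\<Sum>m=1..N-1. acoef N m * (cs N m - 1)^n * sn N m j))"
      using Suc.IH[of "j - 1"] Suc.IH[of "j + 1"] Suc.IH[of j] True by auto
    also have "\<dots> = (\<Sum>m=1..N-1. acoef N m * (cs N m - 1)^n * cs N m * sn N m j) - (\<Sum>m=1..N-1. acoef N m * (cs N m - 1)^n * sn N m j)"
      using sum_sn_rec[of j "\<lambda>m. acoef N m * (cs N m - 1)^n" N] True by (auto simp: of_nat_diff) (simp add: field_simps)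
    also have "\<dots> = (\<Sum>m=1..N-1. acoef N m * (cs N m - 1)^Suc n * sn N m j)"
      by (simp add: sum_subtractf[symmetric] algebra_simps)
    finally show ?thesis by simp
  next
    case False
    then have "j = 0 \<or> j = N" using Suc.prems by auto
    then show ?thesis using False assms by (auto simp: Dop_def)
  qed
qed

definition Bseq :: "nat \<Rightarrow> nat \<Rightarrow> nat \<Rightarrow> real" where
  "Bseq N n j = real j + (\<Sum>m=1..N-1. acoef N m * cs N m ^ n * sn N m j)"

lemma Bseq_bounds: assumes "N \<ge> 2"
  shows "j \<le> N \<Longrightarrow> 0 \<le> Bseq N n j \<and> Bseq N n j \<le> real N"
proof (induction n arbitrary: j)
  case 0
  then have "Bseq N 0 j = wedge N j" using wedge_exp[OF assms] by (simp add: Bseq_def)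
  then show ?case by (simp add: wedge_def)
next
  case (Suc n)
  show ?case
  proof (cases "1 \<le> j \<and> j \<le> N - 1")
    case True
    have "Bseq N n (j - 1) + Bseq N n (j + 1) = 2 * Bseq N (Suc n) j"
      using sum_sn_rec[of j "\<lambda>m. acoef N m * cs N m ^ n" N] True by (simp add: Bseq_def of_nat_diff algebra_simps)
    moreover have "0 \<le> Bseq N n (j - 1) \<and> Bseq N n (j - 1) \<le> real N" "0 \<le> Bseq N n (j + 1) \<and> Bseq N n (j + 1) \<le> real N"
      using Suc.IH True by auto
    ultimately show ?thesis by linarith
  next
    case False
    then have "j = 0 \<or> j = N" using Suc.prems by auto
    then show ?thesis using assms by (auto simp: Bseq_def)
  qed
qed

lemma rho_integral:
  fixes \<alpha> p q :: real assumes a: "\<alpha> > 0"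
  shows "((\<lambda>u. (u * p + q) * rho \<alpha> u) has_integral (p / 2 + q)) {0..1}"
proof -
  define G where "G = Gamma (2 * \<alpha>) / (Gamma \<alpha>)^2"
  have nz: "z \<notin> \<int>\<^sub>\<le>\<^sub>0" if "z > 0" for z :: real using that by (auto elim!: nonpos_Ints_cases)
  have g1: "Gamma (\<alpha> + 1) = \<alpha> * Gamma \<alpha>" using Gamma_plus1[OF nz[OF a]] .
  have g2: "Gamma (2 * \<alpha> + 1) = 2 * \<alpha> * Gamma (2 * \<alpha>)" using Gamma_plus1[OF nz, of "2 * \<alpha>"] a by simp
  have pos: "Gamma \<alpha> > 0" "Gamma (2 * \<alpha>) > 0" using a by auto
  have B1: "G * Beta \<alpha> \<alpha> = 1" using pos by (simp add: G_def Beta_def power2_eq_square)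
  have g3: "Gamma (\<alpha> + 1 + \<alpha>) = 2 * \<alpha> * Gamma (2 * \<alpha>)" using g2 by (simp add: algebra_simps)
  have B2: "G * Beta (\<alpha> + 1) \<alpha> = 1 / 2"
  proof -
    have "Gamma \<alpha> \<noteq> 0" "Gamma (\<alpha> * 2) \<noteq> 0" using pos by (simp_all add: mult.commute)
    then show ?thesis
    unfolding G_def Beta_def g1 g3 using a by (simp add: power2_eq_square field_simps)
  qed
  have I1: "((\<lambda>t. t powr (\<alpha> - 1) * (1 - t) powr (\<alpha> - 1)) has_integral Beta \<alpha> \<alpha>) {0..1}"
    using has_integral_Beta_real[OF a a] .
  have I2: "((\<lambda>t. t powr \<alpha> * (1 - t) powr (\<alpha> - 1)) has_integral Beta (\<alpha> + 1) \<alpha>) {0..1}"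
    using has_integral_Beta_real[of "\<alpha> + 1" \<alpha>] a by simp
  have "((\<lambda>t. (G * p) * (t powr \<alpha> * (1 - t) powr (\<alpha> - 1)) + (G * q) * (t powr (\<alpha> - 1) * (1 - t) powr (\<alpha> - 1)))
      has_integral ((G * p) * Beta (\<alpha> + 1) \<alpha> + (G * q) * Beta \<alpha> \<alpha>)) {0..1}"
    by (intro has_integral_add has_integral_mult_right I1 I2)
  moreover have "(G * p) * Beta (\<alpha> + 1) \<alpha> + (G * q) * Beta \<alpha> \<alpha> = p * (G * Beta (\<alpha> + 1) \<alpha>) + q * (G * Beta \<alpha> \<alpha>)"
    by (simp only: mult_ac)
  moreover have "p * (G * Beta (\<alpha> + 1) \<alpha>) + q * (G * Beta \<alpha> \<alpha>) = p / 2 + q"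
    unfolding B1 B2 by simp
  moreover have "(u * p + q) * rho \<alpha> u = (G * p) * (u powr \<alpha> * (1 - u) powr (\<alpha> - 1)) + (G * q) * (u powr (\<alpha> - 1) * (1 - u) powr (\<alpha> - 1))"
    if "u \<in> {0..1}" for u
  proof -
    have m: "(u * (1 - u)) powr (\<alpha> - 1) = u powr (\<alpha> - 1) * (1 - u) powr (\<alpha> - 1)"
      using that by (simp add: powr_mult)
    have "u * u powr (\<alpha> - 1) = u powr \<alpha>"
    proof (cases "u = 0")
      case True then show ?thesis by simp
    next
      case False then show ?thesis using that powr_mult_base[of u "\<alpha> - 1"] by simp
    qed
    then show ?thesis unfolding rho_def G_def[symmetric] m by (simp add: algebra_simps)
  qed
  ultimately show ?thesis by (subst has_integral_cong) (auto simp del: has_integral_mult_right)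
qed

definition ev :: "nat \<Rightarrow> nat \<Rightarrow> real" where "ev i j = (if j = i then 1 else 0)"

lemma Dop_lin: "Dop N (\<lambda>j. x j + c * z j) = (\<lambda>j. Dop N x j + c * Dop N z j)"
  by (rule ext) (simp add: Dop_def algebra_simps add_divide_distrib)

lemma Dpow_lin: "(Dop N ^^ n) (\<lambda>j. x j + c * z j) = (\<lambda>j. (Dop N ^^ n) x j + c * (Dop N ^^ n) z j)"
proof (induction n)
  case 0 then show ?case by simp
next
  case (Suc n) then show ?case by (simp add: Dop_lin)
qed

lemma Dop_zero: "Dop N (\<lambda>j. 0) = (\<lambda>j. 0)"
  by (simp add: Dop_def fun_eq_iff)

lemma Dpow_zero: "(Dop N ^^ n) (\<lambda>j. 0) = (\<lambda>j. 0)"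
  by (induction n) (simp_all add: Dop_zero)

lemma Dpow_sum: "finite I \<Longrightarrow> (Dop N ^^ n) (\<lambda>j. \<Sum>i\<in>I. c i * f i j) = (\<lambda>j. \<Sum>i\<in>I. c i * (Dop N ^^ n) (f i) j)"
proof (induction I rule: finite_induct)
  case empty then show ?case by (simp add: Dpow_zero)
next
  case (insert a I)
  have "(Dop N ^^ n) (\<lambda>j. \<Sum>i\<in>insert a I. c i * f i j) = (Dop N ^^ n) (\<lambda>j. (\<Sum>i\<in>I. c i * f i j) + c a * f a j)"
    using insert by (simp add: add.commute)
  also have "\<dots> = (\<lambda>j. (\<Sum>i\<in>I. c i * (Dop N ^^ n) (f i) j) + c a * (Dop N ^^ n) (f a) j)"
    by (subst Dpow_lin) (simp add: insert.IH)
  finally show ?case using insert by (simp add: add.commute)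
qed

lemma resample_eq: "resample x i u = (\<lambda>j. x j + (u * (x (i - 1) - x (i + 1)) + (x (i + 1) - x i)) * ev i j)"
  by (rule ext) (simp add: resample_def ev_def algebra_simps)

lemma Dop_decomp: "Dop N y = (\<lambda>j. \<Sum>i\<in>{1..N-1}. Dop N y i * ev i j)"
proof (rule ext)
  fix j
  show "Dop N y j = (\<Sum>i\<in>{1..N-1}. Dop N y i * ev i j)"
  proof (cases "j \<in> {1..N-1}")
    case True
    then have "(\<Sum>i\<in>{1..N-1}. Dop N y i * ev i j) = Dop N y j"
      by (simp add: ev_def sum.delta' if_distrib[of "\<lambda>v. Dop N y _ * v"] cong: if_cong)
    then show ?thesis by simp
  next
    case False
    then show ?thesis by (auto simp: ev_def Dop_def)
  qed
qed

lemma gen_pow: assumes a: "\<alpha> > 0"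
  shows "(gen N \<alpha> ^^ n) (\<lambda>x. x k) = (\<lambda>x. (Dop N ^^ n) x k)"
proof (induction n)
  case 0 then show ?case by simp
next
  case (Suc n)
  have *: "gen N \<alpha> (\<lambda>x. (Dop N ^^ n) x k) y = (Dop N ^^ Suc n) y k" for y
  proof -
    have "gen N \<alpha> (\<lambda>x. (Dop N ^^ n) x k) y
        = (\<Sum>i = 1..N - 1. integral {0..1} (\<lambda>u. (u * (y (i - 1) - y (i + 1)) + (y (i + 1) - y i)) * (Dop N ^^ n) (ev i) k * rho \<alpha> u))"
      unfolding gen_def resample_eq Dpow_lin by (simp add: algebra_simps)
    also have "\<dots> = (\<Sum>i = 1..N - 1. Dop N y i * (Dop N ^^ n) (ev i) k)"
    proof (rule sum.cong[OF refl])
      fix i assume i: "i \<in> {1..N-1}"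
      have "((\<lambda>u. (u * ((y (i - 1) - y (i + 1)) * (Dop N ^^ n) (ev i) k) + (y (i + 1) - y i) * (Dop N ^^ n) (ev i) k) * rho \<alpha> u)
          has_integral ((y (i - 1) - y (i + 1)) * (Dop N ^^ n) (ev i) k / 2 + (y (i + 1) - y i) * (Dop N ^^ n) (ev i) k)) {0..1}"
        by (rule rho_integral[OF a])
      then have "integral {0..1} (\<lambda>u. (u * (y (i - 1) - y (i + 1)) + (y (i + 1) - y i)) * (Dop N ^^ n) (ev i) k * rho \<alpha> u)
           = (y (i - 1) - y (i + 1)) * (Dop N ^^ n) (ev i) k / 2 + (y (i + 1) - y i) * (Dop N ^^ n) (ev i) k"
        by (simp add: integral_unique algebra_simps)
      also have "\<dots> = Dop N y i * (Dop N ^^ n) (ev i) k"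
        using i by (simp add: Dop_def field_simps)
      finally show "integral {0..1} (\<lambda>u. (u * (y (i - 1) - y (i + 1)) + (y (i + 1) - y i)) * (Dop N ^^ n) (ev i) k * rho \<alpha> u)
           = Dop N y i * (Dop N ^^ n) (ev i) k" .
    qed
    also have "\<dots> = (Dop N ^^ n) (Dop N y) k"
      by (subst (2) Dop_decomp) (simp add: Dpow_sum)
    also have "\<dots> = (Dop N ^^ Suc n) y k"
      by (simp add: funpow_Suc_right del: funpow.simps)
    finally show ?thesis .
  qed
  have "(gen N \<alpha> ^^ Suc n) (\<lambda>x. x k) = gen N \<alpha> (\<lambda>x. (Dop N ^^ n) x k)" using Suc.IH by simp
  then show ?case using * by (simp add: fun_eq_iff)
qed

lemma gen_pow_gen: assumes a: "\<alpha> > 0" and I: "finite I"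
  shows "(gen N \<alpha> ^^ n) (\<lambda>x. (\<Sum>l\<in>I. c l * x (p l)) + d) = (\<lambda>x. (\<Sum>l\<in>I. c l * (Dop N ^^ n) x (p l)) + (if n = 0 then d else 0))"
proof (induction n)
  case 0 then show ?case by simp
next
  case (Suc n)
  define d' where "d' = (if n = 0 then d else 0)"
  have *: "gen N \<alpha> (\<lambda>x. (\<Sum>l\<in>I. c l * (Dop N ^^ n) x (p l)) + d') y = (\<Sum>l\<in>I. c l * (Dop N ^^ Suc n) y (p l))" for y
  proof -
    define E where "E i = (\<Sum>l\<in>I. c l * (Dop N ^^ n) (ev i) (p l))" for i
    have diff: "(\<Sum>l\<in>I. c l * (Dop N ^^ n) (resample y i u) (p l)) + d' - ((\<Sum>l\<in>I. c l * (Dop N ^^ n) y (p l)) + d')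
        = (u * (y (i - 1) - y (i + 1)) + (y (i + 1) - y i)) * E i" for i u
    proof -
      have "(\<Sum>l\<in>I. c l * (Dop N ^^ n) (resample y i u) (p l)) + d' - ((\<Sum>l\<in>I. c l * (Dop N ^^ n) y (p l)) + d')
          = (\<Sum>l\<in>I. c l * ((Dop N ^^ n) (resample y i u) (p l) - (Dop N ^^ n) y (p l)))"
        by (simp add: sum_subtractf right_diff_distrib)
      also have "\<dots> = (\<Sum>l\<in>I. (u * (y (i - 1) - y (i + 1)) + (y (i + 1) - y i)) * (c l * (Dop N ^^ n) (ev i) (p l)))"
        unfolding resample_eq Dpow_lin by (simp add: algebra_simps)
      also have "\<dots> = (u * (y (i - 1) - y (i + 1)) + (y (i + 1) - y i)) * E i"
        unfolding E_def by (simp add: sum_distrib_left)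
      finally show ?thesis .
    qed
    have "gen N \<alpha> (\<lambda>x. (\<Sum>l\<in>I. c l * (Dop N ^^ n) x (p l)) + d') y
        = (\<Sum>i = 1..N - 1. integral {0..1} (\<lambda>u. (u * (y (i - 1) - y (i + 1)) + (y (i + 1) - y i)) * E i * rho \<alpha> u))"
      unfolding gen_def diff by simp
    also have "\<dots> = (\<Sum>i = 1..N - 1. Dop N y i * E i)"
    proof (rule sum.cong[OF refl])
      fix i assume i: "i \<in> {1..N-1}"
      have "((\<lambda>u. (u * ((y (i - 1) - y (i + 1)) * E i) + (y (i + 1) - y i) * E i) * rho \<alpha> u)
          has_integral ((y (i - 1) - y (i + 1)) * E i / 2 + (y (i + 1) - y i) * E i)) {0..1}"
        by (rule rho_integral[OF a])
      then have "integral {0..1} (\<lambda>u. (u * (y (i - 1) - y (i + 1)) + (y (i + 1) - y i)) * E i * rho \<alpha> u)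
           = (y (i - 1) - y (i + 1)) * E i / 2 + (y (i + 1) - y i) * E i"
        by (simp add: integral_unique algebra_simps)
      also have "\<dots> = Dop N y i * E i"
        using i by (simp add: Dop_def field_simps)
      finally show "integral {0..1} (\<lambda>u. (u * (y (i - 1) - y (i + 1)) + (y (i + 1) - y i)) * E i * rho \<alpha> u)
           = Dop N y i * E i" .
    qed
    also have "\<dots> = (\<Sum>l\<in>I. c l * (\<Sum>i = 1..N - 1. Dop N y i * (Dop N ^^ n) (ev i) (p l)))"
      unfolding E_def by (simp add: sum_distrib_left sum_distrib_right mult_ac sum.swap[of _ I])
    also have "\<dots> = (\<Sum>l\<in>I. c l * (Dop N ^^ n) (Dop N y) (p l))"
      by (subst (2) Dop_decomp) (simp add: Dpow_sum)
    also have "\<dots> = (\<Sum>l\<in>I. c l * (Dop N ^^ Suc n) y (p l))"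
      by (simp add: funpow_Suc_right del: funpow.simps)
    finally show ?thesis .
  qed
  have "(gen N \<alpha> ^^ Suc n) (\<lambda>x. (\<Sum>l\<in>I. c l * x (p l)) + d) = gen N \<alpha> (\<lambda>x. (\<Sum>l\<in>I. c l * (Dop N ^^ n) x (p l)) + d')"
    using Suc.IH by (simp add: d'_def)
  then show ?case using * by (simp add: fun_eq_iff)
qed

lemma exp_sums_real: "(\<lambda>n. t ^ n / fact n * (x::real) ^ n) sums exp (x * t)"
proof -
  have "(\<lambda>n. (x * t) ^ n /\<^sub>R fact n) sums exp (x * t)" by (rule exp_converges)
  then show ?thesis by (simp add: power_mult_distrib divide_inverse mult_ac)
qed

lemma exp_sums_sum: fixes g r :: "nat \<Rightarrow> real" and t :: real shows "(\<lambda>n. t ^ n / fact n * (\<Sum>m\<in>I. g m * r m ^ n)) sums (\<Sum>m\<in>I. g m * exp (r m * t))"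
proof -
  have "(\<lambda>n. \<Sum>m\<in>I. g m * (t ^ n / fact n * r m ^ n)) sums (\<Sum>m\<in>I. g m * exp (r m * t))"
    by (intro sums_sum sums_mult) (rule exp_sums_real)
  then show ?thesis by (simp add: sum_distrib_left mult_ac)
qed

lemma semigroup_sums: assumes "N \<ge> 2" "\<alpha> > 0" "k \<le> N"
  shows "(\<lambda>n. t ^ n / fact n * ((gen N \<alpha> ^^ n) (\<lambda>x. x k)) (wedge N)) sums (real k + (\<Sum>m=1..N-1. acoef N m * sn N m k * exp ((cs N m - 1) * t)))"
proof -
  have "(\<lambda>n. t ^ n / fact n * ((gen N \<alpha> ^^ n) (\<lambda>x. x k)) (wedge N))
      = (\<lambda>n. (if n = 0 then real k else 0) + t ^ n / fact n * (\<Sum>m=1..N-1. (acoef N m * sn N m k) * (cs N m - 1) ^ n))"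
    by (rule ext) (simp add: gen_pow[OF assms(2)] Dpow_wedge[OF assms(1,3)] algebra_simps)
  moreover have "(\<lambda>n. (if n = 0 then real k else 0) + t ^ n / fact n * (\<Sum>m=1..N-1. (acoef N m * sn N m k) * (cs N m - 1) ^ n))
      sums (real k + (\<Sum>m=1..N-1. acoef N m * sn N m k * exp ((cs N m - 1) * t)))"
    by (intro sums_add exp_sums_sum sums_single)
  ultimately show ?thesis by simp
qed

lemma semigroup_formula: assumes "N \<ge> 2" "\<alpha> > 0" "k \<le> N"
  shows "semigroup N \<alpha> t (\<lambda>x. x k) (wedge N) = real k + (\<Sum>m=1..N-1. acoef N m * sn N m k * exp ((cs N m - 1) * t))"
  using semigroup_sums[OF assms, of t] unfolding semigroup_def by (simp add: sums_iff)

lemma upper_N: assumes "N \<ge> 2" "k \<le> N" "t \<ge> 0"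
  shows "real k + (\<Sum>m=1..N-1. acoef N m * sn N m k * exp ((cs N m - 1) * t)) \<le> real N"
proof -
  have et: "(\<lambda>n. t ^ n / fact n) sums exp t" using exp_sums_real[of t 1] by simp
  have "(\<lambda>n. t ^ n / fact n * Bseq N n k) = (\<lambda>n. t ^ n / fact n * real k + t ^ n / fact n * (\<Sum>m=1..N-1. (acoef N m * sn N m k) * cs N m ^ n))"
    by (rule ext) (simp add: Bseq_def algebra_simps)
  moreover have "(\<lambda>n. t ^ n / fact n * real k + t ^ n / fact n * (\<Sum>m=1..N-1. (acoef N m * sn N m k) * cs N m ^ n))
     sums (exp t * real k + (\<Sum>m=1..N-1. acoef N m * sn N m k * exp (cs N m * t)))"
    using et by (intro sums_add exp_sums_sum sums_mult2)
  ultimately have s1: "(\<lambda>n. t ^ n / fact n * Bseq N n k) sums (exp t * real k + (\<Sum>m=1..N-1. acoef N m * sn N m k * exp (cs N m * t)))"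
    by simp
  have s2: "(\<lambda>n. t ^ n / fact n * real N) sums (exp t * real N)"
    using et by (rule sums_mult2)
  have "exp t * real k + (\<Sum>m=1..N-1. acoef N m * sn N m k * exp (cs N m * t)) \<le> exp t * real N"
    using Bseq_bounds[OF assms(1,2)] assms(3)
    by (intro sums_le[OF _ s1 s2] mult_left_mono) auto
  moreover have "(\<Sum>m=1..N-1. acoef N m * sn N m k * exp (cs N m * t)) = exp t * (\<Sum>m=1..N-1. acoef N m * sn N m k * exp ((cs N m - 1) * t))"
    by (simp add: sum_distrib_left algebra_simps exp_diff)
  ultimately have "exp t * (real k + (\<Sum>m=1..N-1. acoef N m * sn N m k * exp ((cs N m - 1) * t))) \<le> exp t * real N"
    by (simp add: algebra_simps)
  then show ?thesis by simp
qed

lemma sin_le_xcos: assumes "0 \<le> y" "y \<le> pi" shows "y * cos y \<le> sin y"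
proof -
  let ?f = "\<lambda>y. sin y - y * cos y"
  have "\<And>u. \<lbrakk>0 \<le> u; u \<le> y\<rbrakk> \<Longrightarrow> \<exists>d. (?f has_real_derivative d) (at u) \<and> d \<ge> 0"
  proof -
    fix u assume u: "0 \<le> u" "u \<le> y"
    have "(?f has_real_derivative u * sin u) (at u)"
      by (auto intro!: derivative_eq_intros simp: algebra_simps)
    moreover have "u * sin u \<ge> 0" using u assms by (intro mult_nonneg_nonneg sin_ge_zero) auto
    ultimately show "\<exists>d. (?f has_real_derivative d) (at u) \<and> d \<ge> 0" by blast
  qed
  then have "?f y \<ge> ?f 0" using DERIV_nonneg_imp_nondecreasing[OF assms(1)] by blast
  then show ?thesis by simp
qed

lemma acoef_bounds: assumes "N \<ge> 2" "1 \<le> m" "m \<le> N - 1"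
  shows "0 \<le> acoef N m \<and> acoef N m \<le> real N"
proof -
  define y where "y = real m * pi / (2 * real N)"
  have "m < N" using assms by auto
  then have mN: "real m < real N" by simp
  have y0: "0 < y" using assms by (simp add: y_def)
  have y1: "y < pi / 2" using mN assms by (simp add: y_def field_simps)
  have s: "sin y > 0" using y0 y1 by (intro sin_gt_zero) auto
  have c: "cos y > 0" using y0 y1 by (intro cos_gt_zero) auto
  have "y * cos y \<le> sin y" using sin_le_xcos[of y] y0 y1 by simp
  then have "cot y \<le> 1 / y" using s y0 by (simp add: cot_def field_simps)
  also have "1 / y = 2 * real N / (real m * pi)" using assms by (simp add: y_def)
  also have "\<dots> \<le> 2 * real N / pi"
    using assms by (intro divide_left_mono) auto
  also have "\<dots> \<le> real N" using pi_ge_two assms by (simp add: field_simps)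
  finally show ?thesis using s c by (simp add: acoef_def y_def[symmetric] cot_def)
qed

lemma lambda_lin: assumes "N \<ge> 2" shows "m \<le> N \<Longrightarrow> 1 - cs N m \<ge> real m * gap N"
proof (induction m)
  case 0 then show ?case by (simp add: cs_def)
next
  case (Suc m)
  define x where "x = pi / real N"
  have x0: "0 < x" using assms by (simp add: x_def)
  have "real (Suc m) * pi \<le> real N * pi" using Suc.prems by (intro mult_right_mono) auto
  then have mx: "real (Suc m) * x \<le> pi" using assms by (simp add: x_def field_simps)
  have q1: "(real m * x + real (Suc m) * x) / 2 = (2 * real m + 1) * x / 2" "(real (Suc m) * x - real m * x) / 2 = x / 2"
    by (simp_all add: algebra_simps)
  have e1: "cos (real m * x) - cos (real (Suc m) * x) = 2 * sin ((2 * real m + 1) * x / 2) * sin (x / 2)"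
    using cos_diff_cos[of "real m * x" "real (Suc m) * x"] unfolding q1 .
  have e2: "gap N = 2 * sin (x / 2) * sin (x / 2)"
    using cos_diff_cos[of 0 x] by (simp add: gap_def x_def)
  have q2: "((2 * real m + 1) * x / 2 - x / 2) / 2 = real m * x / 2" "((2 * real m + 1) * x / 2 + x / 2) / 2 = real (Suc m) * x / 2"
    by (simp_all add: algebra_simps)
  have e3: "sin ((2 * real m + 1) * x / 2) - sin (x / 2) = 2 * sin (real m * x / 2) * cos (real (Suc m) * x / 2)"
    using sin_diff_sin[of "(2 * real m + 1) * x / 2" "x / 2"] unfolding q2 .
  have mx': "real m * x \<le> pi" using mx x0 by (simp add: algebra_simps)
  have h1: "0 \<le> real m * x / 2" using x0 by simp
  have h2: "real m * x / 2 \<le> pi" using mx' pi_gt_zero by linarith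
  have "sin (real m * x / 2) \<ge> 0" using sin_ge_zero[OF h1 h2] .
  moreover have "cos (real (Suc m) * x / 2) \<ge> 0"
  proof -
    have "0 \<le> real (Suc m) * x / 2" using x0 by simp
    moreover have "real (Suc m) * x / 2 \<le> pi / 2" using mx by simp
    ultimately show ?thesis by (intro cos_ge_zero) linarith+
  qed
  ultimately have "0 \<le> 2 * sin (real m * x / 2) * cos (real (Suc m) * x / 2)" by simp
  then have "sin ((2 * real m + 1) * x / 2) \<ge> sin (x / 2)" using e3 by linarith
  moreover have "sin (x / 2) \<ge> 0" using x0 assms by (intro sin_ge_zero) (auto simp: x_def field_simps)
  ultimately have "2 * sin ((2 * real m + 1) * x / 2) * sin (x / 2) \<ge> gap N"
    unfolding e2 by (simp add: mult_right_mono)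
  moreover have "1 - cs N m \<ge> real m * gap N" using Suc by simp
  moreover have "cs N m = cos (real m * x)" "cs N (Suc m) = cos (real (Suc m) * x)" by (simp_all add: cs_def x_def)
  ultimately show ?case using e1 by (simp add: algebra_simps)
qed

lemma geom_bound: fixes q :: real assumes "0 \<le> q" "q \<le> 1/2" shows "(\<Sum>m=1..M. q ^ m) \<le> 2 * q - 2 * q ^ Suc M"
proof (induction M)
  case 0 then show ?case by simp
next
  case (Suc M)
  have "q ^ Suc M * (1 - 2 * q) \<ge> 0" using assms by simp
  then show ?case using Suc by (simp add: algebra_simps)
qed

lemma main_bound: assumes "N \<ge> 2" "\<alpha> > 0" "k \<le> N" "t \<ge> 0"
  shows "semigroup N \<alpha> t (\<lambda>x. x k) (wedge N) \<le> real k + 2 * real N * exp (- gap N * t)"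
proof -
  define q where "q = exp (- gap N * t)"
  define Z where "Z = (\<Sum>m=1..N-1. acoef N m * sn N m k * exp ((cs N m - 1) * t))"
  have sg: "semigroup N \<alpha> t (\<lambda>x. x k) (wedge N) = real k + Z"
    using semigroup_formula[OF assms(1-3)] by (simp add: Z_def)
  have q0: "0 \<le> q" by (simp add: q_def)
  show ?thesis
  proof (cases "q \<le> 1/2")
    case True
    have "Z \<le> (\<Sum>m=1..N-1. real N * q ^ m)"
      unfolding Z_def
    proof (rule sum_mono)
      fix m assume m: "m \<in> {1..N-1}"
      have ab: "0 \<le> acoef N m \<and> acoef N m \<le> real N" using acoef_bounds[OF assms(1)] m by auto
      have "1 - cs N m \<ge> real m * gap N" using lambda_lin[OF assms(1)] m by auto
      from mult_right_mono[OF this assms(4)]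
      have "(cs N m - 1) * t \<le> real m * (- gap N * t)" by (simp add: algebra_simps)
      then have ex: "exp ((cs N m - 1) * t) \<le> q ^ m" unfolding q_def exp_of_nat_mult[symmetric] by simp
      have "acoef N m * sn N m k * exp ((cs N m - 1) * t) \<le> acoef N m * 1 * exp ((cs N m - 1) * t)"
        using ab by (intro mult_right_mono mult_left_mono) (auto simp: sn_def)
      also have "\<dots> \<le> real N * q ^ m" using ab ex by (simp add: mult_mono)
      finally show "acoef N m * sn N m k * exp ((cs N m - 1) * t) \<le> real N * q ^ m" .
    qed
    also have "\<dots> = real N * (\<Sum>m=1..N-1. q ^ m)" by (simp add: sum_distrib_left)
    also have "\<dots> \<le> real N * (2 * q)"
    proof -
      have "0 \<le> q ^ Suc (N-1)" using q0 by simp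
      then have "(\<Sum>m=1..N-1. q ^ m) \<le> 2 * q" using geom_bound[OF q0 True, of "N-1"] by linarith
      then show ?thesis by (intro mult_left_mono) auto
    qed
    finally show ?thesis using sg by (simp add: q_def)
  next
    case False
    have "real k + Z \<le> real N" using upper_N[OF assms(1,3,4)] by (simp add: Z_def)
    moreover have "real N * 1 \<le> real N * (2 * q)" using False by (intro mult_left_mono) auto
    ultimately show ?thesis using sg by (simp add: q_def)
  qed
qed

lemma Wfun_form: "Wfun N K = (\<lambda>x. (\<Sum>l\<in>{1..K-1}. 1 * x (l * N div K)) + (- (\<Sum>l\<in>{1..K-1}. real (l * N div K))))"
  by (rule ext) (simp add: Wfun_def sum_subtractf)

theorem proposition6p7:
  fixes N K :: nat and \<alpha> :: real
  assumes "\<alpha> \<ge> 1" and "N \<ge> 2"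
  shows "(\<forall>k \<in> {1..N - 1}. \<forall>t \<ge> 0.
            semigroup N \<alpha> t (\<lambda>x. x k) (wedge N) \<le> real k + 2 * real N * exp (- gap N * t))
       \<and> (\<forall>t \<ge> 0. semigroup N \<alpha> t (Wfun N K) (wedge N) \<le> 2 * real K * real N * exp (- gap N * t))"
proof
  have a: "\<alpha> > 0" using assms by simp
  show "\<forall>k \<in> {1..N - 1}. \<forall>t \<ge> 0.
            semigroup N \<alpha> t (\<lambda>x. x k) (wedge N) \<le> real k + 2 * real N * exp (- gap N * t)"
    using main_bound[OF assms(2) a] by auto
  show "\<forall>t \<ge> 0. semigroup N \<alpha> t (Wfun N K) (wedge N) \<le> 2 * real K * real N * exp (- gap N * t)"
  proof (intro allI impI)
    fix t :: real assume t: "t \<ge> 0"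
    define u where "u l = l * N div K" for l
    define d where "d = - (\<Sum>l\<in>{1..K-1}. real (u l))"
    define q where "q = exp (- gap N * t)"
    have uN: "u l \<le> N" if "l \<in> {1..K-1}" for l
    proof -
      have "l * N div K \<le> K * N div K" using that by (intro div_le_mono mult_right_mono) auto
      also have "\<dots> = N" using that by (cases "K = 0") auto
      finally show ?thesis by (simp add: u_def)
    qed
    define S where "S l = semigroup N \<alpha> t (\<lambda>x. x (u l)) (wedge N)" for l
    have ser: "(\<lambda>n. t ^ n / fact n * ((gen N \<alpha> ^^ n) (Wfun N K)) (wedge N))
        = (\<lambda>n. (\<Sum>l\<in>{1..K-1}. t ^ n / fact n * ((gen N \<alpha> ^^ n) (\<lambda>x. x (u l))) (wedge N)) + t ^ n / fact n * (if n = 0 then d else 0))"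
      unfolding Wfun_form gen_pow_gen[OF a finite_atLeastAtMost] gen_pow[OF a]
      by (rule ext) (simp add: u_def d_def sum_distrib_left algebra_simps)
    have "(\<lambda>n. (\<Sum>l\<in>{1..K-1}. t ^ n / fact n * ((gen N \<alpha> ^^ n) (\<lambda>x. x (u l))) (wedge N)) + t ^ n / fact n * (if n = 0 then d else 0))
        sums ((\<Sum>l\<in>{1..K-1}. S l) + d)"
    proof (intro sums_add sums_sum)
      fix l assume l: "l \<in> {1..K-1}"
      show "(\<lambda>n. t ^ n / fact n * ((gen N \<alpha> ^^ n) (\<lambda>x. x (u l))) (wedge N)) sums S l"
        using semigroup_sums[OF assms(2) a uN[OF l], of t] semigroup_formula[OF assms(2) a uN[OF l], of t]
        by (simp add: S_def)
    next
      have "(\<lambda>n. t ^ n / fact n * (if n = 0 then d else 0)) = (\<lambda>n. if n = 0 then d else 0)" by (rule ext) simp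
      then show "(\<lambda>n. t ^ n / fact n * (if n = 0 then d else 0)) sums d" using sums_single[of 0 "\<lambda>_. d"] by simp
    qed
    then have "semigroup N \<alpha> t (Wfun N K) (wedge N) = (\<Sum>l\<in>{1..K-1}. S l) + d"
      unfolding semigroup_def ser by (simp add: sums_iff)
    also have "\<dots> = (\<Sum>l\<in>{1..K-1}. S l - real (u l))" by (simp add: d_def sum_subtractf)
    also have "\<dots> \<le> (\<Sum>l\<in>{1..K-1}. 2 * real N * q)"
    proof (rule sum_mono)
      fix l assume l: "l \<in> {1..K-1}"
      show "S l - real (u l) \<le> 2 * real N * q"
        using main_bound[OF assms(2) a uN[OF l] t] by (simp add: S_def q_def)
    qed
    also have "\<dots> = real (K - 1) * (2 * real N * q)" by simp
    also have "\<dots> \<le> real K * (2 * real N * q)" by (intro mult_right_mono) (auto simp: q_def)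
    finally show "semigroup N \<alpha> t (Wfun N K) (wedge N) \<le> 2 * real K * real N * exp (- gap N * t)"
      by (simp add: q_def mult_ac)
  qed
qed

end
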